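(* Let $f:\mathbb{R}^\ell\times\mathbb{R}^m\to\mathbb{R}^\ell$ be $C^1$, let $\Lambda$ be a parameter shift with limits $\lambda_\pm$, and let $X$ define a stable path. Let $N\in\mathbb{N}$ be such that $\|[D_xf(X(s),\Lambda(s))]^n\|<\frac14$ for all $s\in\mathbb{R}$ and all $n\ge N$. Then for all sufficiently small $\epsilon>0$, $F_0^n(\mathcal{N}_\epsilon)\subset\mathcal{N}_{\epsilon/3}$ for all $n\in\{N,N+1,\ldots,N(N+1)\}$.
   Context: A parameter shift is a $C^1$ function $\Lambda:\mathbb{R}\to\mathbb{R}^m$ with $\lim_{s\to\pm\infty}\Lambda(s)=\lambda_\pm$ and $\lim_{s\to\pm\infty}\Lambda'(s)=0$. A stable path is given by $X:\mathbb{R}\to\mathbb{R}^\ell$ such that: $X(s)$ is a fixed point of $f(\cdot,\Lambda(s))$ for every $s$; $\{(s,X(s))\}$ is a connected curve; the limits $X_\pm=\lim_{s\to\pm\infty}X(s)$ exist and are fixed points of $f(\cdot,\lambda_\pm)$; and the spectral radius of $D_xf(X(s),\Lambda(s))$ is $<1$ for all $s\in\mathbb{R}\cup\{\pm\infty\}$ (with $X(\pm\infty)=X_\pm$, $\Lambda(\pm\infty)=\lambda_\pm$). For $r\ge0$, $F_r:\mathbb{R}^{\ell+1}\to\mathbb{R}^{\ell+1}$ is $F_r(s,x)=(s+r,f(x,\Lambda(s)))$, and $F_r^n$ is its $n$-fold composition. For $\epsilon>0$, $\mathcal{N}_\epsilon=\{(s,x):s\in\mathbb{R},\ \|x-X(s)\|\le\epsilon\}$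 (Euclidean norm; matrix norms are the induced norms). *)

theory Defs
  imports "HOL-Analysis.Analysis"
begin

definition C1_joint :: "('a::euclidean_space \<Rightarrow> 'b::euclidean_space \<Rightarrow> 'c::euclidean_space) \<Rightarrow> bool" where
  "C1_joint f \<longleftrightarrow> (\<exists>D :: 'a \<times> 'b \<Rightarrow> ('a \<times> 'b) \<Rightarrow>\<^sub>L 'c.
      (\<forall>z. ((\<lambda>(x, p). f x p) has_derivative blinfun_apply (D z)) (at z)) \<and> continuous_on UNIV D)"

definition Dx :: "('a::real_normed_vector \<Rightarrow> 'b \<Rightarrow> 'a) \<Rightarrow> 'a \<Rightarrow> 'b \<Rightarrow> ('a \<Rightarrow> 'a)" where
  "Dx f x p = frechet_derivative (\<lambda>y. f y p) (at x)"

definition is_eigenvalue :: "(real^'l \<Rightarrow> real^'l) \<Rightarrow> complex \<Rightarrow> bool" where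
  "is_eigenvalue L \<mu> \<longleftrightarrow> (\<exists>v :: complex^'l. v \<noteq> 0 \<and>
      (\<chi> i j. complex_of_real (matrix L $ i $ j)) *v v = \<mu> *s v)"

definition spec_rad :: "(real^'l \<Rightarrow> real^'l) \<Rightarrow> real" where
  "spec_rad L = Sup (cmod ` {\<mu>. is_eigenvalue L \<mu>})"

definition parameter_shift :: "(real \<Rightarrow> real^'m) \<Rightarrow> real^'m \<Rightarrow> real^'m \<Rightarrow> bool" where
  "parameter_shift \<Lambda> lm lp \<longleftrightarrow> \<Lambda> C1_differentiable_on UNIV \<and>
     (\<Lambda> \<longlongrightarrow> lm) at_bot \<and> (\<Lambda> \<longlongrightarrow> lp) at_top \<and>
     ((\<lambda>s. vector_derivative \<Lambda> (at s)) \<longlongrightarrow> 0) at_bot \<and>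
     ((\<lambda>s. vector_derivative \<Lambda> (at s)) \<longlongrightarrow> 0) at_top"

definition stable_path ::
  "(real^'l \<Rightarrow> real^'m \<Rightarrow> real^'l) \<Rightarrow> (real \<Rightarrow> real^'m) \<Rightarrow> real^'m \<Rightarrow> real^'m
     \<Rightarrow> (real \<Rightarrow> real^'l) \<Rightarrow> real^'l \<Rightarrow> real^'l \<Rightarrow> bool" where
  "stable_path f \<Lambda> lm lp X Xm Xp \<longleftrightarrow>
     (\<forall>s. f (X s) (\<Lambda> s) = X s) \<and>
     connected {(s, X s) | s. True} \<and>
     (X \<longlongrightarrow> Xm) at_bot \<and> (X \<longlongrightarrow> Xp) at_top \<and>
     f Xm lm = Xm \<and> f Xp lp = Xp \<and>
     (\<forall>s. spec_rad (Dx f (X s) (\<Lambda> s)) < 1) \<and>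
     spec_rad (Dx f Xm lm) < 1 \<and> spec_rad (Dx f Xp lp) < 1"

definition Fmap :: "(real^'l \<Rightarrow> real^'m \<Rightarrow> real^'l) \<Rightarrow> (real \<Rightarrow> real^'m) \<Rightarrow> real
     \<Rightarrow> (real \<times> (real^'l)) \<Rightarrow> (real \<times> (real^'l))" where
  "Fmap f \<Lambda> r = (\<lambda>(s, x). (s + r, f x (\<Lambda> s)))"

definition nbhd :: "(real \<Rightarrow> real^'l) \<Rightarrow> real \<Rightarrow> (real \<times> (real^'l)) set" where
  "nbhd X \<epsilon> = {(s, x). norm (x - X s) \<le> \<epsilon>}"

end

theory Submission
  imports Defs
begin


lemma graph_gap_right:
  fixes Y :: "real \<Rightarrow> 'a::metric_space"
  assumes conn: "connected {(s, Y s) | s. True}" and r: "r > 0"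
    and gap: "\<forall>s. \<bar>s - s0\<bar> < \<delta> \<longrightarrow> dist (Y s) (Y s0) \<noteq> r"
    and s1: "s0 < s1" "s1 < s0 + \<delta>"
  shows "dist (Y s1) (Y s0) < r"
proof (rule ccontr)
  assume "\<not> ?thesis"
  moreover have "\<bar>s1 - s0\<bar> < \<delta>" using s1 by auto
  ultimately have d1: "dist (Y s1) (Y s0) > r" using gap by force
  define U where "U = {z::real\<times>'a. fst z < s0} \<union> {z. fst z < s1 \<and> dist (snd z) (Y s0) < r}"
  define V where "V = {z::real\<times>'a. fst z > s0 \<and> dist (snd z) (Y s0) > r} \<union> {z. fst z > s1}"
  have oU: "open U" unfolding U_def
    by (intro open_Un open_Collect_less open_Collect_conj continuous_intros)
  have oV: "open V" unfolding V_def
    by (intro open_Un open_Collect_less open_Collect_conj continuous_intros)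
  have "U \<inter> V \<inter> {(s, Y s) | s. True} = {}" unfolding U_def V_def using s1 by auto
  moreover have "{(s, Y s) | s. True} \<subseteq> U \<union> V"
  proof
    fix z assume "z \<in> {(s, Y s) | s. True}"
    then obtain s where z: "z = (s, Y s)" by blast
    show "z \<in> U \<union> V"
    proof (cases "s < s0 \<or> s > s1")
      case True then show ?thesis using z s1 unfolding U_def V_def by auto
    next
      case False
      show ?thesis
      proof (cases "s = s1")
        case True then show ?thesis using z d1 s1 unfolding V_def by auto
      next
        case ne: False
        show ?thesis
        proof (cases "s = s0")
          case True then show ?thesis using z s1 r unfolding U_def by auto
        next
          case False
          with ne \<open>\<not> (s < s0 \<or> s > s1)\<close> s1 have "\<bar>s - s0\<bar> < \<delta>" "s0 < s" "s < s1" by auto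
          with gap have "dist (Y s) (Y s0) \<noteq> r" by blast
          then show ?thesis using z \<open>s0 < s\<close> \<open>s < s1\<close> unfolding U_def V_def by (cases "dist (Y s) (Y s0) < r") auto
        qed
      qed
    qed
  qed
  ultimately have "U \<inter> {(s, Y s) | s. True} = {} \<or> V \<inter> {(s, Y s) | s. True} = {}"
    using connectedD[OF conn oU oV] by blast
  moreover have "(s0, Y s0) \<in> U" using r s1 unfolding U_def by auto
  moreover have "(s1, Y s1) \<in> V" using d1 s1 unfolding V_def by auto
  ultimately show False by blast
qed

lemma graph_gap_left:
  fixes Y :: "real \<Rightarrow> 'a::metric_space"
  assumes conn: "connected {(s, Y s) | s. True}" and r: "r > 0"
    and gap: "\<forall>s. \<bar>s - s0\<bar> < \<delta> \<longrightarrow> dist (Y s) (Y s0) \<noteq> r"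
    and s1: "s1 < s0" "s0 - \<delta> < s1"
  shows "dist (Y s1) (Y s0) < r"
proof (rule ccontr)
  assume "\<not> ?thesis"
  moreover have "\<bar>s1 - s0\<bar> < \<delta>" using s1 by auto
  ultimately have d1: "dist (Y s1) (Y s0) > r" using gap by force
  define U where "U = {z::real\<times>'a. fst z > s0} \<union> {z. fst z > s1 \<and> dist (snd z) (Y s0) < r}"
  define V where "V = {z::real\<times>'a. fst z < s0 \<and> dist (snd z) (Y s0) > r} \<union> {z. fst z < s1}"
  have oU: "open U" unfolding U_def
    by (intro open_Un open_Collect_less open_Collect_conj continuous_intros)
  have oV: "open V" unfolding V_def
    by (intro open_Un open_Collect_less open_Collect_conj continuous_intros)
  have "U \<inter> V \<inter> {(s, Y s) | s. True} = {}" unfolding U_def V_def using s1 by auto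
  moreover have "{(s, Y s) | s. True} \<subseteq> U \<union> V"
  proof
    fix z assume "z \<in> {(s, Y s) | s. True}"
    then obtain s where z: "z = (s, Y s)" by blast
    show "z \<in> U \<union> V"
    proof (cases "s > s0 \<or> s < s1")
      case True then show ?thesis using z s1 unfolding U_def V_def by auto
    next
      case False
      show ?thesis
      proof (cases "s = s1")
        case True then show ?thesis using z d1 s1 unfolding V_def by auto
      next
        case ne: False
        show ?thesis
        proof (cases "s = s0")
          case True then show ?thesis using z s1 r unfolding U_def by auto
        next
          case False
          with ne \<open>\<not> (s > s0 \<or> s < s1)\<close> s1 have "\<bar>s - s0\<bar> < \<delta>" "s < s0" "s1 < s" by auto
          with gap have "dist (Y s) (Y s0) \<noteq> r" by blast
          then show ?thesis using z \<open>s < s0\<close> \<open>s1 < s\<close> unfolding U_def V_def by (cases "dist (Y s) (Y s0) < r") auto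
        qed
      qed
    qed
  qed
  ultimately have "U \<inter> {(s, Y s) | s. True} = {} \<or> V \<inter> {(s, Y s) | s. True} = {}"
    using connectedD[OF conn oU oV] by blast
  moreover have "(s0, Y s0) \<in> U" using r s1 unfolding U_def by auto
  moreover have "(s1, Y s1) \<in> V" using d1 s1 unfolding V_def by auto
  ultimately show False by blast
qed

lemma graph_gap:
  fixes Y :: "real \<Rightarrow> 'a::metric_space"
  assumes conn: "connected {(s, Y s) | s. True}" and r: "r > 0"
    and gap: "\<forall>s. \<bar>s - s0\<bar> < \<delta> \<longrightarrow> dist (Y s) (Y s0) \<noteq> r"
    and s: "\<bar>s - s0\<bar> < \<delta>"
  shows "dist (Y s) (Y s0) < r"
proof -
  consider "s = s0" | "s0 < s" | "s < s0" by linarith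
  then show ?thesis
  proof cases
    case 1 then show ?thesis using r by simp
  next
    case 2 then show ?thesis using graph_gap_right[OF conn r gap, of s] s by auto
  next
    case 3 then show ?thesis using graph_gap_left[OF conn r gap, of s] s by auto
  qed
qed



lemma rem_bound:
  fixes h :: "'a::real_normed_vector \<Rightarrow> 'b::real_normed_vector"
  assumes der: "\<forall>y\<in>cball x0 r. (h has_derivative blinfun_apply (Dy y)) (at y)"
    and nb: "\<forall>y\<in>cball x0 r. norm (Dy y - A) \<le> \<kappa>" and e: "norm e \<le> r"
  shows "norm (h (x0+e) - h x0 - blinfun_apply A e) \<le> \<kappa> * norm e"
proof -
  define g where "g y = h y - blinfun_apply A y" for y
  have "norm (g (x0+e) - g x0) \<le> \<kappa> * norm ((x0+e) - x0)"
  proof (rule differentiable_bound[where S="cball x0 r" and f'="\<lambda>y. blinfun_apply (Dy y - A)"])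
    show "convex (cball x0 r)" by simp
    show "(g has_derivative blinfun_apply (Dy y - A)) (at y within cball x0 r)" if "y \<in> cball x0 r" for y
    proof -
      have "(g has_derivative (\<lambda>v. blinfun_apply (Dy y) v - blinfun_apply A v)) (at y)"
        unfolding g_def using der that by (auto intro!: derivative_eq_intros)
      moreover have "blinfun_apply (Dy y - A) = (\<lambda>v. blinfun_apply (Dy y) v - blinfun_apply A v)"
        by (rule ext) (simp add: blinfun.diff_left)
      ultimately show ?thesis by (simp add: has_derivative_at_withinI)
    qed
    show "onorm (blinfun_apply (Dy y - A)) \<le> \<kappa>" if "y \<in> cball x0 r" for y
      using nb that by (simp add: norm_blinfun.rep_eq[symmetric])
    show "x0 + e \<in> cball x0 r" using e by (simp add: dist_norm)
    show "x0 \<in> cball x0 r" using e norm_ge_zero[of e] by (simp del: norm_ge_zero)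
  qed
  then show ?thesis unfolding g_def by (simp add: blinfun.add_right algebra_simps)
qed

lemma iter_bound:
  fixes g :: "'a::real_normed_vector \<Rightarrow> 'a" and A :: "'a \<Rightarrow>\<^sub>L 'a"
  assumes rem: "\<forall>e. norm e \<le> r0 \<longrightarrow> norm (g (x0 + e) - x0 - blinfun_apply A e) \<le> \<kappa> * norm e"
    and nA: "norm A \<le> B" and B: "0 \<le> B" and k0: "0 \<le> \<kappa>" and k1: "\<kappa> \<le> 1"
  shows "norm v * (B+1)^k \<le> r0 \<Longrightarrow> norm ((g^^k)(x0+v) - x0) \<le> (B+1)^k * norm v
     \<and> norm ((g^^k)(x0+v) - x0 - (blinfun_apply A ^^ k) v) \<le> \<kappa> * real k * (B+1)^k * norm v"
proof (induction k)
  case 0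
  then show ?case by simp
next
  case (Suc k)
  have "norm v * (B+1)^k \<le> norm v * (B+1)^Suc k"
    using B by (intro mult_left_mono) auto
  with Suc.prems have "norm v * (B+1)^k \<le> r0" by linarith
  with Suc.IH have IH1: "norm ((g^^k)(x0+v) - x0) \<le> (B+1)^k * norm v"
    and IH2: "norm ((g^^k)(x0+v) - x0 - (blinfun_apply A ^^ k) v) \<le> \<kappa> * real k * (B+1)^k * norm v" by auto
  define e where "e = (g^^k)(x0+v) - x0"
  define w where "w = e - (blinfun_apply A ^^ k) v"
  have ek: "(g^^k)(x0+v) = x0 + e" unfolding e_def by simp
  have "norm e \<le> r0" using IH1 Suc.prems \<open>norm v * (B+1)^k \<le> r0\<close> unfolding e_def by (simp add: mult.commute)
  with rem have re: "norm (g (x0 + e) - x0 - blinfun_apply A e) \<le> \<kappa> * norm e" by blast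
  define \<rho> where "\<rho> = g (x0 + e) - x0 - blinfun_apply A e"
  have gs: "(g^^Suc k)(x0+v) - x0 = blinfun_apply A e + \<rho>" unfolding \<rho>_def using ek by simp
  have nAe: "norm (blinfun_apply A e) \<le> B * norm e"
    using norm_blinfun[of A e] nA by (meson mult_right_mono norm_ge_zero order_trans)
  have "norm ((g^^Suc k)(x0+v) - x0) \<le> B * norm e + \<kappa> * norm e"
  proof -
    have "norm ((g^^Suc k)(x0+v) - x0) \<le> norm (blinfun_apply A e) + norm \<rho>"
      unfolding gs by (rule norm_triangle_ineq)
    then show ?thesis using nAe re unfolding \<rho>_def by linarith
  qed
  also have "\<dots> \<le> (B+1) * norm e" using k1 mult_right_mono[OF k1 norm_ge_zero[of e]] by (simp add: algebra_simps)
  also have "\<dots> \<le> (B+1) * ((B+1)^k * norm v)" using IH1 B unfolding e_def by (intro mult_left_mono) auto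
  finally have C1: "norm ((g^^Suc k)(x0+v) - x0) \<le> (B+1)^Suc k * norm v" by simp
  have ws: "(g^^Suc k)(x0+v) - x0 - (blinfun_apply A ^^ Suc k) v = blinfun_apply A w + \<rho>"
    using gs unfolding w_def by (simp add: blinfun.diff_right)
  have nAw: "norm (blinfun_apply A w) \<le> B * norm w"
    using norm_blinfun[of A w] nA by (meson mult_right_mono norm_ge_zero order_trans)
  have "norm ((g^^Suc k)(x0+v) - x0 - (blinfun_apply A ^^ Suc k) v) \<le> B * norm w + \<kappa> * norm e"
  proof -
    have "norm ((g^^Suc k)(x0+v) - x0 - (blinfun_apply A ^^ Suc k) v) \<le> norm (blinfun_apply A w) + norm \<rho>"
      unfolding ws by (rule norm_triangle_ineq)
    then show ?thesis using nAw re unfolding \<rho>_def by linarith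
  qed
  also have "\<dots> \<le> B * (\<kappa> * real k * (B+1)^k * norm v) + \<kappa> * ((B+1)^k * norm v)"
    using IH2 IH1 B k0 unfolding w_def e_def by (intro add_mono mult_left_mono) auto
  also have "\<dots> = \<kappa> * ((B+1)^k * norm v) * (B * real k + 1)" by (simp add: algebra_simps)
  also have "\<dots> \<le> \<kappa> * ((B+1)^k * norm v) * (real (Suc k) * (B+1))"
    using B k0 by (intro mult_left_mono) (auto simp: algebra_simps)
  also have "\<dots> = \<kappa> * real (Suc k) * (B+1)^Suc k * norm v" by (simp add: algebra_simps)
  finally show ?case using C1 by simp
qed



lemma dist_pair_le: "dist (a, b) (c, d) \<le> dist a c + dist b d"
  by (simp add: dist_Pair_Pair sqrt_sum_squares_le_sum)

lemma C1_setup: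
  fixes f :: "'a::euclidean_space \<Rightarrow> 'b::euclidean_space \<Rightarrow> 'a"
  assumes "C1_joint f"
  obtains Dxb :: "'a \<times> 'b \<Rightarrow> 'a \<Rightarrow>\<^sub>L 'a" where
    "\<forall>x p. ((\<lambda>y. f y p) has_derivative blinfun_apply (Dxb (x,p))) (at x)"
    "\<forall>x p. Dx f x p = blinfun_apply (Dxb (x,p))"
    "continuous_on UNIV Dxb"
    "continuous_on UNIV (\<lambda>(x,p). f x p)"
proof -
  obtain D :: "'a \<times> 'b \<Rightarrow> ('a \<times> 'b) \<Rightarrow>\<^sub>L 'a" where
    D: "\<forall>z. ((\<lambda>(x, p). f x p) has_derivative blinfun_apply (D z)) (at z)" and cD: "continuous_on UNIV D"
    using assms unfolding C1_joint_def by blast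
  have bl: "bounded_linear (\<lambda>h::'a. (h, 0::'b))"
    by (intro bounded_linear_Pair bounded_linear_ident bounded_linear_zero)
  define E where "E = Blinfun (\<lambda>h::'a. (h, 0::'b))"
  have E: "blinfun_apply E = (\<lambda>h. (h, 0))" unfolding E_def using bl by (simp add: bounded_linear_Blinfun_apply)
  define Dxb where "Dxb z = D z o\<^sub>L E" for z
  have pd: "((\<lambda>y. f y p) has_derivative blinfun_apply (Dxb (x,p))) (at x)" for x p
  proof -
    have 1: "((\<lambda>y. (y, p)) has_derivative (\<lambda>h. (h, 0))) (at x)"
      by (auto intro!: derivative_eq_intros)
    have "((\<lambda>y. (\<lambda>(x, p). f x p) (y, p)) has_derivative (\<lambda>h. blinfun_apply (D (x,p)) (h, 0))) (at x)"
      using has_derivative_compose[OF 1, of "\<lambda>(x, p). f x p" "blinfun_apply (D (x,p))"] D by simp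
    moreover have "blinfun_apply (Dxb (x,p)) = (\<lambda>h. blinfun_apply (D (x,p)) (h, 0))"
      unfolding Dxb_def by (rule ext) (simp add: E)
    ultimately show ?thesis by simp
  qed
  show thesis
  proof
    show "\<forall>x p. ((\<lambda>y. f y p) has_derivative blinfun_apply (Dxb (x,p))) (at x)" using pd by blast
    show "\<forall>x p. Dx f x p = blinfun_apply (Dxb (x,p))"
      unfolding Dx_def using pd frechet_derivative_at by metis
    show "continuous_on UNIV Dxb" unfolding Dxb_def
      by (intro bounded_bilinear.continuous_on[OF bounded_bilinear_blinfun_compose] cD continuous_on_const)
    show "continuous_on UNIV (\<lambda>(x,p). f x p)"
      using D has_derivative_continuous continuous_at_imp_continuous_on by blast
  qed
qed

lemma X_cont:
  fixes f :: "'a::euclidean_space \<Rightarrow> 'b::euclidean_space \<Rightarrow> 'a"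
    and X :: "real \<Rightarrow> 'a" and \<Lambda> :: "real \<Rightarrow> 'b"
  assumes pd: "\<forall>x p. ((\<lambda>y. f y p) has_derivative blinfun_apply (Dxb (x,p))) (at x)"
    and cD: "continuous_on UNIV Dxb"
    and cf: "continuous_on UNIV (\<lambda>(x,p). f x p)"
    and cL: "continuous_on UNIV \<Lambda>"
    and fx: "\<forall>s. f (X s) (\<Lambda> s) = X s"
    and conn: "connected {(s, X s)|s. True}"
    and inj: "\<forall>s v. blinfun_apply (Dxb (X s, \<Lambda> s)) v = v \<longrightarrow> v = 0"
  shows "continuous_on UNIV X"
proof -
  have "isCont X s0" for s0
  proof -
    define x0 where "x0 = X s0"
    define p0 where "p0 = \<Lambda> s0"
    define A where "A = Dxb (x0, p0)"
    have lin: "linear (\<lambda>v. v - blinfun_apply A v)"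
      by (intro linear_compose_sub linear_id[unfolded id_def] bounded_linear.linear[OF blinfun.bounded_linear_right])
    have "inj (\<lambda>v. v - blinfun_apply A v)"
    proof (rule injI)
      fix u v assume "u - blinfun_apply A u = v - blinfun_apply A v"
      then have "blinfun_apply A (u - v) = u - v" by (simp add: blinfun.diff_right algebra_simps)
      then have "u - v = 0" using inj unfolding A_def x0_def p0_def by blast
      then show "u = v" by simp
    qed
    then obtain m where m: "m > 0" "\<And>v. m * norm v \<le> norm (v - blinfun_apply A v)"
      using linear_inj_bounded_below_pos[OF lin] by blast
    obtain r1 where r1: "r1 > 0" "\<forall>z. dist z (x0,p0) < r1 \<longrightarrow> dist (Dxb z) A < m/2"
      using cD m(1) unfolding continuous_on_iff A_def by (metis UNIV_I half_gt_zero)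
    obtain \<delta> where \<delta>: "\<delta> > 0" "\<forall>s. dist s s0 < \<delta> \<longrightarrow> dist (\<Lambda> s) p0 < r1/2"
      using cL r1(1) unfolding continuous_on_iff p0_def by (metis UNIV_I half_gt_zero)
    define r where "r = r1/2"
    have r: "r > 0" using r1 unfolding r_def by simp
    have remb: "norm (f (x0+e) (\<Lambda> s) - f x0 (\<Lambda> s) - blinfun_apply A e) \<le> m/2 * norm e"
      if s: "\<bar>s - s0\<bar> < \<delta>" and e: "norm e \<le> r" for s e
    proof (rule rem_bound[where Dy="\<lambda>y. Dxb (y, \<Lambda> s)" and r=r])
      show "\<forall>y\<in>cball x0 r. ((\<lambda>y. f y (\<Lambda> s)) has_derivative blinfun_apply (Dxb (y, \<Lambda> s))) (at y)"
        using pd by blast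
      show "\<forall>y\<in>cball x0 r. norm (Dxb (y, \<Lambda> s) - A) \<le> m / 2"
      proof
        fix y assume y: "y \<in> cball x0 r"
        have "dist (y, \<Lambda> s) (x0, p0) \<le> dist y x0 + dist (\<Lambda> s) p0" by (rule dist_pair_le)
        also have "\<dots> < r1"
        proof -
          have "dist (\<Lambda> s) p0 < r1/2" using \<delta>(2) s by (simp add: dist_real_def)
          moreover have "dist y x0 \<le> r1/2" using y unfolding r_def by (simp add: dist_commute)
          ultimately show ?thesis by linarith
        qed
        finally show "norm (Dxb (y, \<Lambda> s) - A) \<le> m / 2" using r1(2) by (simp add: dist_norm less_imp_le)
      qed
      show "norm e \<le> r" by fact
    qed
    have cfL: "continuous_on UNIV (\<lambda>s. f x0 (\<Lambda> s))"
    proof -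
      have "continuous_on UNIV ((\<lambda>(x,p). f x p) \<circ> (\<lambda>s. (x0, \<Lambda> s)))"
        by (intro continuous_on_compose continuous_intros cL continuous_on_subset[OF cf]) auto
      then show ?thesis by (simp add: o_def)
    qed
    have cond: "\<exists>d>0. \<forall>s. \<bar>s - s0\<bar> < d \<and> dist (X s) x0 \<le> r \<longrightarrow> dist (X s) x0 < e" if e: "e > 0" for e
    proof -
      obtain d where d: "d > 0" "\<forall>s. dist s s0 < d \<longrightarrow> dist (f x0 (\<Lambda> s)) (f x0 (\<Lambda> s0)) < m * e / 2"
        using cfL e m(1) unfolding continuous_on_iff by (metis UNIV_I half_gt_zero mult_pos_pos)
      have fx0: "f x0 p0 = x0" using fx unfolding x0_def p0_def by simp
      show ?thesis
      proof (intro exI[of _ "min d \<delta>"] conjI allI impI)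
        show "min d \<delta> > 0" using d \<delta> by simp
        fix s assume a: "\<bar>s - s0\<bar> < min d \<delta> \<and> dist (X s) x0 \<le> r"
        define v where "v = X s - x0"
        have nv: "norm v \<le> r" using a unfolding v_def by (simp add: dist_norm)
        have Xs: "X s = x0 + v" unfolding v_def by simp
        have "v - blinfun_apply A v = (f (x0+v) (\<Lambda> s) - f x0 (\<Lambda> s) - blinfun_apply A v) + (f x0 (\<Lambda> s) - x0)"
          using fx[rule_format, of s] unfolding Xs by (simp add: algebra_simps)
        then have "norm (v - blinfun_apply A v) \<le> norm (f (x0+v) (\<Lambda> s) - f x0 (\<Lambda> s) - blinfun_apply A v) + norm (f x0 (\<Lambda> s) - x0)"
          by (metis norm_triangle_ineq)
        moreover have "norm (f (x0+v) (\<Lambda> s) - f x0 (\<Lambda> s) - blinfun_apply A v) \<le> m/2 * norm v"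
          using remb[of s v] a nv by simp
        moreover have "norm (f x0 (\<Lambda> s) - x0) < m * e / 2"
          using d(2) a fx0 unfolding p0_def by (simp add: dist_norm dist_real_def)
        ultimately have "m * norm v < m * e" using m(2)[of v] by linarith
        then have "norm v < e" using m(1) by simp
        then show "dist (X s) x0 < e" unfolding v_def by (simp add: dist_norm)
      qed
    qed
    obtain dr where dr: "dr > 0" "\<forall>s. \<bar>s - s0\<bar> < dr \<and> dist (X s) x0 \<le> r \<longrightarrow> dist (X s) x0 < r"
      using cond[OF r] by blast
    have gap: "\<forall>s. \<bar>s - s0\<bar> < dr \<longrightarrow> dist (X s) (X s0) \<noteq> r"
      using dr(2) unfolding x0_def by force
    have inball: "dist (X s) x0 < r" if "\<bar>s - s0\<bar> < dr" for s
      using graph_gap[OF conn r gap that] unfolding x0_def .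
    show "isCont X s0"
      unfolding isCont_def LIM_eq
    proof (intro allI impI)
      fix e :: real assume e: "e > 0"
      obtain d where d: "d > 0" "\<forall>s. \<bar>s - s0\<bar> < d \<and> dist (X s) x0 \<le> r \<longrightarrow> dist (X s) x0 < e"
        using cond[OF e] by blast
      show "\<exists>S>0. \<forall>x. x \<noteq> s0 \<and> norm (x - s0) < S \<longrightarrow> norm (X x - X s0) < e"
      proof (intro exI[of _ "min d dr"] conjI allI impI)
        show "min d dr > 0" using d dr by simp
        fix s assume "s \<noteq> s0 \<and> norm (s - s0) < min d dr"
        then show "norm (X s - X s0) < e" using d(2) inball[of s] unfolding x0_def
          by (simp add: dist_norm less_imp_le)
      qed
    qed
  qed
  then show ?thesis by (simp add: continuous_at_imp_continuous_on)
qed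



lemma bounded_range_lims:
  fixes h :: "real \<Rightarrow> 'a::metric_space"
  assumes c: "continuous_on UNIV h" and a: "(h \<longlongrightarrow> a) at_bot" and b: "(h \<longlongrightarrow> b) at_top"
  shows "bounded (range h)"
proof -
  have "eventually (\<lambda>s. dist (h s) b < 1) at_top" using b by (rule tendstoD) simp
  then obtain T where T: "\<forall>s\<ge>T. dist (h s) b < 1" unfolding eventually_at_top_linorder by blast
  have "eventually (\<lambda>s. dist (h s) a < 1) at_bot" using a by (rule tendstoD) simp
  then obtain S where S: "\<forall>s\<le>S. dist (h s) a < 1" unfolding eventually_at_bot_linorder by blast
  have "range h \<subseteq> ball a 1 \<union> ball b 1 \<union> h ` {S..T}"
  proof
    fix y assume "y \<in> range h"
    then obtain s where y: "y = h s" by blast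
    show "y \<in> ball a 1 \<union> ball b 1 \<union> h ` {S..T}"
    proof (cases "s \<le> S")
      case True then show ?thesis using S y by (simp add: dist_commute)
    next
      case False
      show ?thesis
      proof (cases "s \<ge> T")
        case True then show ?thesis using T y by (simp add: dist_commute)
      next
        case False2: False
        then show ?thesis using False y by auto
      qed
    qed
  qed
  moreover have "bounded (h ` {S..T})"
    by (intro compact_imp_bounded compact_continuous_image continuous_on_subset[OF c]) auto
  ultimately show ?thesis by (meson bounded_Un bounded_ball bounded_subset)
qed

lemma Fmap_pow: "(Fmap f \<Lambda> 0 ^^ n) (s, x) = (s, ((\<lambda>y. f y (\<Lambda> s)) ^^ n) x)"
  by (induction n) (auto simp: Fmap_def)

lemma bl_funpow:
  fixes g :: "'a::real_normed_vector \<Rightarrow> 'a"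
  assumes g: "bounded_linear g"
  shows "bounded_linear (g ^^ n)"
proof (induction n)
  case 0
  show ?case unfolding funpow.simps id_def by (rule bounded_linear_ident)
next
  case (Suc n)
  show ?case unfolding funpow.simps o_def by (rule bounded_linear_compose[OF g Suc.IH])
qed

theorem mainTheorem11:
  fixes f :: "real^'l \<Rightarrow> real^'m \<Rightarrow> real^'l"
    and \<Lambda> :: "real \<Rightarrow> real^'m" and lm lp :: "real^'m"
    and X :: "real \<Rightarrow> real^'l" and Xm Xp :: "real^'l"
    and N :: nat
  assumes "C1_joint f"
    and "parameter_shift \<Lambda> lm lp"
    and "stable_path f \<Lambda> lm lp X Xm Xp"
    and "\<forall>s n. n \<ge> N \<longrightarrow> onorm ((Dx f (X s) (\<Lambda> s)) ^^ n) < 1/4"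
  shows "\<exists>\<epsilon>0>0. \<forall>\<epsilon>. 0 < \<epsilon> \<and> \<epsilon> < \<epsilon>0 \<longrightarrow>
           (\<forall>n \<in> {N .. N * (N + 1)}. (Fmap f \<Lambda> 0 ^^ n) ` nbhd X \<epsilon> \<subseteq> nbhd X (\<epsilon> / 3))"
proof -
  obtain Dxb :: "(real^'l) \<times> (real^'m) \<Rightarrow> (real^'l) \<Rightarrow>\<^sub>L (real^'l)" where
    pd: "\<forall>x p. ((\<lambda>y. f y p) has_derivative blinfun_apply (Dxb (x,p))) (at x)" and
    DxD: "\<forall>x p. Dx f x p = blinfun_apply (Dxb (x,p))" and
    cD: "continuous_on UNIV Dxb" and cf: "continuous_on UNIV (\<lambda>(x,p). f x p)"
    using C1_setup[OF assms(1)] by blast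
  have cL: "continuous_on UNIV \<Lambda>"
    using assms(2) unfolding parameter_shift_def by (blast intro: C1_differentiable_imp_continuous_on)
  have fx: "\<forall>s. f (X s) (\<Lambda> s) = X s" and conn: "connected {(s, X s)|s. True}"
    and Xlim: "(X \<longlongrightarrow> Xm) at_bot" "(X \<longlongrightarrow> Xp) at_top"
    using assms(3) unfolding stable_path_def by auto
  have Llim: "(\<Lambda> \<longlongrightarrow> lm) at_bot" "(\<Lambda> \<longlongrightarrow> lp) at_top"
    using assms(2) unfolding parameter_shift_def by auto
  have onN: "onorm (blinfun_apply (Dxb (X s, \<Lambda> s)) ^^ n) < 1/4" if "n \<ge> N" for s n
    using assms(4) that by (simp add: DxD)
  have blp: "bounded_linear (blinfun_apply (Dxb z) ^^ n)" for z n
    by (rule bl_funpow) (rule blinfun.bounded_linear_right)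
  have inj: "\<forall>s v. blinfun_apply (Dxb (X s, \<Lambda> s)) v = v \<longrightarrow> v = 0"
  proof (intro allI impI)
    fix s v assume av: "blinfun_apply (Dxb (X s, \<Lambda> s)) v = v"
    have pv: "(blinfun_apply (Dxb (X s, \<Lambda> s)) ^^ n) v = v" for n
      by (induction n) (auto simp: av)
    have "norm v \<le> onorm (blinfun_apply (Dxb (X s, \<Lambda> s)) ^^ N) * norm v"
      using onorm[OF blp[where z="(X s, \<Lambda> s)" and n=N], of v] pv[of N] by simp
    also have "\<dots> \<le> 1/4 * norm v" using onN[of N s] by (intro mult_right_mono) auto
    finally show "v = 0" by simp
  qed
  have cX: "continuous_on UNIV X" by (rule X_cont[OF pd cD cf cL fx conn inj])
  have "bounded (range (\<lambda>s. (X s, \<Lambda> s)))"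
    by (rule bounded_range_lims[where a="(Xm, lm)" and b="(Xp, lp)"])
       (auto intro!: continuous_intros cX cL tendsto_Pair Xlim Llim)
  then obtain R where R: "\<forall>s. norm (X s, \<Lambda> s) \<le> R" unfolding bounded_iff by blast
  define K where "K = cball (0 :: (real^'l) \<times> (real^'m)) (R+1)"
  have cK: "compact K" unfolding K_def by simp
  have "bounded (Dxb ` K)"
    by (intro compact_imp_bounded compact_continuous_image continuous_on_subset[OF cD] cK) auto
  then obtain B0 where B0: "\<forall>z\<in>K. norm (Dxb z) \<le> B0" unfolding bounded_iff by blast
  define B where "B = max B0 0"
  have B: "B \<ge> 0" "\<forall>z\<in>K. norm (Dxb z) \<le> B" using B0 unfolding B_def by (auto intro: max.coboundedI1)
  define M where "M = N * (N + 1)"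
  define \<kappa> where "\<kappa> = 1 / (12 * (real M + 1) * (B+1)^M)"
  have Bp: "(B+1)^M \<ge> 1" using B by simp
  have \<kappa>0: "\<kappa> > 0" unfolding \<kappa>_def using Bp by simp
  have \<kappa>M: "\<kappa> * (real M + 1) * (B+1)^M = 1/12" unfolding \<kappa>_def using Bp B(1) by simp
  have \<kappa>1: "\<kappa> \<le> 1"
  proof -
    have "\<kappa> * 1 * 1 \<le> \<kappa> * (real M + 1) * (B+1)^M"
      using \<kappa>0 Bp by (intro mult_mono) auto
    then show ?thesis using \<kappa>M by simp
  qed
  have "uniformly_continuous_on K Dxb"
    by (intro compact_uniformly_continuous continuous_on_subset[OF cD] cK) auto
  then have "\<forall>e>0. \<exists>d>0. \<forall>x\<in>K. \<forall>x'\<in>K. dist x' x < d \<longrightarrow> dist (Dxb x') (Dxb x) < e"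
    unfolding uniformly_continuous_on_def .
  then obtain d where d: "d > 0" "\<forall>z\<in>K. \<forall>z'\<in>K. dist z' z < d \<longrightarrow> dist (Dxb z') (Dxb z) < \<kappa>"
    using \<kappa>0 by blast
  define r0 where "r0 = min 1 (d/2)"
  have r0: "r0 > 0" "r0 \<le> 1" "r0 < d" using d unfolding r0_def by auto
  have inK: "(y, \<Lambda> s) \<in> K" if "norm (y - X s) \<le> 1" for y s
  proof -
    have "norm (y, \<Lambda> s) \<le> norm (X s, \<Lambda> s) + norm ((y, \<Lambda> s) - (X s, \<Lambda> s))"
      by (rule norm_triangle_sub)
    also have "norm ((y, \<Lambda> s) - (X s, \<Lambda> s)) = norm (y - X s)" by (simp add: norm_Pair)
    finally show ?thesis using R[rule_format, of s] that unfolding K_def by simp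
  qed
  have rem: "\<forall>e. norm e \<le> r0 \<longrightarrow> norm ((\<lambda>y. f y (\<Lambda> s)) (X s + e) - X s - blinfun_apply (Dxb (X s, \<Lambda> s)) e) \<le> \<kappa> * norm e" for s
  proof (intro allI impI)
    fix e :: "real^'l" assume e: "norm e \<le> r0"
    have "norm (f (X s + e) (\<Lambda> s) - f (X s) (\<Lambda> s) - blinfun_apply (Dxb (X s, \<Lambda> s)) e) \<le> \<kappa> * norm e"
    proof (rule rem_bound[where Dy="\<lambda>y. Dxb (y, \<Lambda> s)" and r=r0])
      show "\<forall>y\<in>cball (X s) r0. ((\<lambda>y. f y (\<Lambda> s)) has_derivative blinfun_apply (Dxb (y, \<Lambda> s))) (at y)"
        using pd by blast
      show "\<forall>y\<in>cball (X s) r0. norm (Dxb (y, \<Lambda> s) - Dxb (X s, \<Lambda> s)) \<le> \<kappa>"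
      proof
        fix y assume y: "y \<in> cball (X s) r0"
        then have ny: "norm (y - X s) \<le> r0" by (simp add: dist_norm norm_minus_commute)
        have "dist (y, \<Lambda> s) (X s, \<Lambda> s) < d" using ny r0 by (simp add: dist_Pair_Pair dist_norm)
        moreover have "(y, \<Lambda> s) \<in> K" "(X s, \<Lambda> s) \<in> K" using inK ny r0 by auto
        ultimately have "dist (Dxb (y, \<Lambda> s)) (Dxb (X s, \<Lambda> s)) < \<kappa>" using d(2) by blast
        then show "norm (Dxb (y, \<Lambda> s) - Dxb (X s, \<Lambda> s)) \<le> \<kappa>" by (simp add: dist_norm)
      qed
      show "norm e \<le> r0" by fact
    qed
    then show "norm ((\<lambda>y. f y (\<Lambda> s)) (X s + e) - X s - blinfun_apply (Dxb (X s, \<Lambda> s)) e) \<le> \<kappa> * norm e"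
      using fx by simp
  qed
  have nA: "norm (Dxb (X s, \<Lambda> s)) \<le> B" for s using B(2) inK[of "X s" s] by simp
  define \<epsilon>0 where "\<epsilon>0 = r0 / (B+1)^M"
  have \<epsilon>0: "\<epsilon>0 > 0" unfolding \<epsilon>0_def using r0 Bp by simp
  show ?thesis
  proof (intro exI[of _ \<epsilon>0] conjI allI impI ballI subsetI)
    show "\<epsilon>0 > 0" by fact
    fix \<epsilon> n w assume \<epsilon>: "0 < \<epsilon> \<and> \<epsilon> < \<epsilon>0" and n: "n \<in> {N .. N * (N + 1)}"
      and w: "w \<in> (Fmap f \<Lambda> 0 ^^ n) ` nbhd X \<epsilon>"
    then obtain s x where sx: "norm (x - X s) \<le> \<epsilon>" and wd: "w = (Fmap f \<Lambda> 0 ^^ n) (s, x)"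
      unfolding nbhd_def by auto
    define v where "v = x - X s"
    define A where "A = Dxb (X s, \<Lambda> s)"
    define g where "g = (\<lambda>y. f y (\<Lambda> s))"
    have nM: "n \<le> M" "N \<le> n" using n unfolding M_def by auto
    have pw: "(B+1)^n \<le> (B+1)^M" using nM B by (intro power_increasing) auto
    have "norm v * (B+1)^n \<le> \<epsilon> * (B+1)^M"
      using sx pw B \<epsilon> unfolding v_def by (intro mult_mono) auto
    also have "\<dots> \<le> \<epsilon>0 * (B+1)^M" using \<epsilon> Bp by (intro mult_right_mono) auto
    also have "\<dots> = r0" unfolding \<epsilon>0_def using Bp B(1) by simp
    finally have vb: "norm v * (B+1)^n \<le> r0" .
    have ib: "norm ((g^^n)(X s+v) - X s - (blinfun_apply A ^^ n) v) \<le> \<kappa> * real n * (B+1)^n * norm v"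
      using iter_bound[OF rem[of s, folded g_def A_def] nA[of s, folded A_def] B(1) less_imp_le[OF \<kappa>0] \<kappa>1 vb] unfolding g_def by blast
    have "\<kappa> * real n * (B+1)^n \<le> \<kappa> * (real M + 1) * (B+1)^M"
      using nM pw \<kappa>0 B by (intro mult_mono) auto
    then have "\<kappa> * real n * (B+1)^n * norm v \<le> 1/12 * norm v" using \<kappa>M by (intro mult_right_mono) auto
    with ib have ib2: "norm ((g^^n)(X s+v) - X s - (blinfun_apply A ^^ n) v) \<le> 1/12 * norm v" by linarith
    have "norm ((blinfun_apply A ^^ n) v) \<le> onorm (blinfun_apply A ^^ n) * norm v"
      by (rule onorm[OF blp[where z="(X s, \<Lambda> s)" and n=n, folded A_def]])
    also have "\<dots> \<le> 1/4 * norm v" using onN[OF nM(2), of s] unfolding A_def by (intro mult_right_mono) auto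
    finally have an: "norm ((blinfun_apply A ^^ n) v) \<le> 1/4 * norm v" .
    have "norm ((g^^n)(X s+v) - X s) \<le> norm ((g^^n)(X s+v) - X s - (blinfun_apply A ^^ n) v) + norm ((blinfun_apply A ^^ n) v)"
      using norm_triangle_sub[of "(g^^n)(X s+v) - X s" "(blinfun_apply A ^^ n) v"] by simp
    also have "\<dots> \<le> 1/3 * norm v" using ib2 an by linarith
    also have "\<dots> \<le> \<epsilon> / 3" using sx unfolding v_def by simp
    finally have "norm ((g^^n) x - X s) \<le> \<epsilon> / 3" unfolding v_def by simp
    then show "w \<in> nbhd X (\<epsilon> / 3)" unfolding wd Fmap_pow nbhd_def g_def by simp
  qed
qed

end
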